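(* Let $p$ be a prime, $d\geq 2$, let $X$ be the free abelian pro-$p$ group on $x_1,\ldots,x_d$, and let $R=\mathbb{Z}_p[[X]]$ be its completed group algebra over $\mathbb{Z}_p$. Let $\mathcal{C}\subseteq X^{(d)}$ denote the set of all bases $\mathbf{y}=(y_1,\ldots,y_d)$ of $X$. Then $$\bigcap_{\mathbf{y}\in\mathcal{C}}\big((y_1-1)R+\cdots+(y_{d-1}-1)R\big)=0.$$
   Context: A basis of the free abelian pro-$p$ group $X\cong\mathbb{Z}_p^{d}$ is a $d$-tuple $(y_1,\ldots,y_d)$ of elements of $X$ such that $X$ is the (internal) direct product of the procyclic subgroups $\overline{\langle y_i\rangle}\cong\mathbb{Z}_p$, equivalently a tuple topologically generating $X$. $\mathbb{Z}_p[[X]]=\varprojlim \mathbb{Z}_p/p^n[X/U]$ over open subgroups $U$ and $n$. *)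

theory Defs
  imports Main "HOL-Computational_Algebra.Primes"
begin

text \<open>Z_p = compatible residue sequences z n in {0..<p^n}.
 X = Z_p^d: x i n = level-n residue of coordinate i (i < d), zero for i >= d.
 X/p^n X = (Z/p^n)^d is modelled by the box B n.
 Z_p[[X]] = inverse limit over n of (Z/p^n)[(Z/p^n)^d] (the subgroups p^n X are cofinal
 among open subgroups): compatible families mu n : box n -> {0..<p^n}.\<close>

definition padic_int :: "nat \<Rightarrow> (nat \<Rightarrow> int) set" where
  "padic_int p = {z. (\<forall>n. 0 \<le> z n \<and> z n < int p ^ n) \<and>
                     (\<forall>n. z (Suc n) mod (int p ^ n) = z n)}"

definition Xgrp :: "nat \<Rightarrow> nat \<Rightarrow> (nat \<Rightarrow> nat \<Rightarrow> int) set" where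
  "Xgrp p d = {x. (\<forall>i<d. x i \<in> padic_int p) \<and> (\<forall>i\<ge>d. \<forall>n. x i n = 0)}"

definition lvl :: "(nat \<Rightarrow> nat \<Rightarrow> int) \<Rightarrow> nat \<Rightarrow> (nat \<Rightarrow> int)" where
  "lvl x n = (\<lambda>i. x i n)"

definition box :: "nat \<Rightarrow> nat \<Rightarrow> nat \<Rightarrow> (nat \<Rightarrow> int) set" where
  "box p d n = {a. (\<forall>i<d. 0 \<le> a i \<and> a i < int p ^ n) \<and> (\<forall>i\<ge>d. a i = 0)}"

definition vmod :: "nat \<Rightarrow> nat \<Rightarrow> (nat \<Rightarrow> int) \<Rightarrow> (nat \<Rightarrow> int)" where
  "vmod p n a = (\<lambda>i. a i mod (int p ^ n))"

type_synonym elt = "nat \<Rightarrow> (nat \<Rightarrow> int) \<Rightarrow> int"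

definition Iw :: "nat \<Rightarrow> nat \<Rightarrow> elt set" where
  "Iw p d = {\<mu>. (\<forall>n a. a \<in> box p d n \<longrightarrow> 0 \<le> \<mu> n a \<and> \<mu> n a < int p ^ n) \<and>
               (\<forall>n a. a \<notin> box p d n \<longrightarrow> \<mu> n a = 0) \<and>
               (\<forall>n a. a \<in> box p d n \<longrightarrow>
                  \<mu> n a = (\<Sum>b\<in>{b\<in>box p d (Suc n). vmod p n b = a}. \<mu> (Suc n) b) mod (int p ^ n))}"

definition Iw_zero :: elt where
  "Iw_zero = (\<lambda>n a. 0)"

definition Iw_add :: "nat \<Rightarrow> nat \<Rightarrow> elt \<Rightarrow> elt \<Rightarrow> elt" where
  "Iw_add p d \<mu> \<nu> = (\<lambda>n c. if c \<in> box p d n then (\<mu> n c + \<nu> n c) mod (int p ^ n) else 0)"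

definition Iw_mult :: "nat \<Rightarrow> nat \<Rightarrow> elt \<Rightarrow> elt \<Rightarrow> elt" where
  "Iw_mult p d \<mu> \<nu> = (\<lambda>n c. if c \<in> box p d n then
      (\<Sum>a\<in>box p d n. \<Sum>b\<in>box p d n.
          if vmod p n (\<lambda>i. a i + b i) = c then \<mu> n a * \<nu> n b else 0) mod (int p ^ n)
      else 0)"

definition grp_minus_one :: "nat \<Rightarrow> nat \<Rightarrow> (nat \<Rightarrow> nat \<Rightarrow> int) \<Rightarrow> elt" where
  "grp_minus_one p d g = (\<lambda>n c. if c \<in> box p d n then
      ((if c = lvl g n then 1 else 0) - (if c = (\<lambda>i. 0) then 1 else 0)) mod (int p ^ n)
      else 0)"

text \<open>A basis (y_0,...,y_{d-1}) of X: elements of X that topologically generate X,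
 i.e. the subgroup they generate is dense: its image in every quotient X/p^n X is everything.\<close>
definition is_basis :: "nat \<Rightarrow> nat \<Rightarrow> (nat \<Rightarrow> nat \<Rightarrow> nat \<Rightarrow> int) \<Rightarrow> bool" where
  "is_basis p d y \<longleftrightarrow> (\<forall>j<d. y j \<in> Xgrp p d) \<and>
     (\<forall>n. \<forall>a\<in>box p d n. \<exists>k::nat \<Rightarrow> int.
         a = vmod p n (\<lambda>i. \<Sum>j<d. k j * y j i n))"

fun Iw_sum :: "nat \<Rightarrow> nat \<Rightarrow> (nat \<Rightarrow> elt) \<Rightarrow> nat \<Rightarrow> elt" where
  "Iw_sum p d f 0 = Iw_zero"
| "Iw_sum p d f (Suc m) = Iw_add p d (Iw_sum p d f m) (f m)"

text \<open>(y_1 - 1)R + ... + (y_{d-1} - 1)R, with 0-based indices j < d - 1.\<close>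
definition basis_ideal :: "nat \<Rightarrow> nat \<Rightarrow> (nat \<Rightarrow> nat \<Rightarrow> nat \<Rightarrow> int) \<Rightarrow> elt set" where
  "basis_ideal p d y = {\<mu>. \<exists>r. (\<forall>j<d - 1. r j \<in> Iw p d) \<and>
       \<mu> = Iw_sum p d (\<lambda>j. Iw_mult p d (grp_minus_one p d (y j)) (r j)) (d - 1)}"

end

theory Submission
  imports Defs "HOL-Library.FuncSet"
begin


lemma sum_mod_cong:
  fixes f g :: "'a \<Rightarrow> int"
  assumes "\<And>x. x \<in> A \<Longrightarrow> f x mod m = g x mod m"
  shows "sum f A mod m = sum g A mod m"
proof -
  have "sum f A mod m = (\<Sum>x\<in>A. f x mod m) mod m" by (simp add: mod_sum_eq)
  also have "\<dots> = (\<Sum>x\<in>A. g x mod m) mod m" using assms by (simp cong: sum.cong)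
  also have "\<dots> = sum g A mod m" by (simp add: mod_sum_eq)
  finally show ?thesis .
qed

lemma finite_box: "finite (box p d n)"
proof -
  have "box p d n \<subseteq> (\<lambda>f i. if i < d then f i else 0) ` (PiE {..<d} (\<lambda>_. {0..<int p ^ n}))"
  proof
    fix a assume a: "a \<in> box p d n"
    let ?f = "restrict a {..<d}"
    have "?f \<in> PiE {..<d} (\<lambda>_. {0..<int p ^ n})" using a by (auto simp: box_def)
    moreover have "a = (\<lambda>i. if i < d then ?f i else 0)" using a by (auto simp: box_def)
    ultimately show "a \<in> (\<lambda>f i. if i < d then f i else 0) ` (PiE {..<d} (\<lambda>_. {0..<int p ^ n}))" by blast
  qed
  moreover have "finite (PiE {..<d} (\<lambda>_. {0..<int p ^ n}))" by (simp add: finite_PiE)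
  ultimately show ?thesis using finite_subset by blast
qed

definition sh :: "nat \<Rightarrow> nat \<Rightarrow> (nat \<Rightarrow> nat \<Rightarrow> int) \<Rightarrow> (nat \<Rightarrow> int) \<Rightarrow> (nat \<Rightarrow> int)" where
  "sh p n g c = vmod p n (\<lambda>i. c i - g i n)"

lemma lvl_in_box: "g \<in> Xgrp p d \<Longrightarrow> lvl g n \<in> box p d n"
  by (auto simp: Xgrp_def padic_int_def lvl_def box_def)

lemma zero_in_box: "prime p \<Longrightarrow> (\<lambda>i. 0) \<in> box p d n"
  by (auto simp: box_def prime_gt_0_nat)

lemma vmod_in_box:
  assumes "prime p" "\<forall>i\<ge>d. x i = 0"
  shows "vmod p n x \<in> box p d n"
  using assms by (auto simp: box_def vmod_def prime_gt_0_nat)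

lemma sh_in_box:
  assumes "prime p" "c \<in> box p d n" "g \<in> Xgrp p d"
  shows "sh p n g c \<in> box p d n"
  unfolding sh_def using assms by (intro vmod_in_box) (auto simp: box_def Xgrp_def)

lemma vmod_box_id: "c \<in> box p d n \<Longrightarrow> vmod p n c = c"
  unfolding vmod_def fun_eq_iff
proof
  fix i assume "c \<in> box p d n"
  then show "c i mod int p ^ n = c i" by (cases "i < d") (auto simp: box_def)
qed

lemma vmod_add_iff:
  assumes "a \<in> box p d n" "b \<in> box p d n" "c \<in> box p d n"
  shows "(vmod p n (\<lambda>i. a i + b i) = c) \<longleftrightarrow> (b = vmod p n (\<lambda>i. c i - a i))"
proof -
  have "((a i + b i) mod int p ^ n = c i) \<longleftrightarrow> (b i = (c i - a i) mod int p ^ n)" for i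
  proof (cases "i < d")
    case True
    let ?M = "int p ^ n"
    have b: "0 \<le> b i" "b i < ?M" and c: "0 \<le> c i" "c i < ?M"
      using assms True by (auto simp: box_def)
    show ?thesis
    proof
      assume h: "(a i + b i) mod ?M = c i"
      have "(c i - a i) mod ?M = ((a i + b i) mod ?M - a i) mod ?M" using h by simp
      also have "\<dots> = b i mod ?M" by (simp add: mod_diff_left_eq)
      also have "\<dots> = b i" using b by simp
      finally show "b i = (c i - a i) mod ?M" by simp
    next
      assume h: "b i = (c i - a i) mod ?M"
      have "(a i + b i) mod ?M = (a i + (c i - a i) mod ?M) mod ?M" using h by simp
      also have "\<dots> = c i mod ?M" by (simp add: mod_add_right_eq)
      also have "\<dots> = c i" using c by simp
      finally show "(a i + b i) mod ?M = c i" .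
    qed
  next
    case False
    then show ?thesis using assms by (auto simp: box_def)
  qed
  then show ?thesis by (auto simp: vmod_def fun_eq_iff)
qed



lemma mult_formula:
  assumes p: "prime p" and g: "g \<in> Xgrp p d" and c: "c \<in> box p d n"
  shows "Iw_mult p d (grp_minus_one p d g) r n c = (r n (sh p n g c) - r n c) mod int p ^ n"
proof -
  let ?M = "int p ^ n" and ?B = "box p d n" and ?G = "lvl g n"
  let ?gm = "grp_minus_one p d g n"
  let ?del = "\<lambda>a. (if a = ?G then 1 else 0) - (if a = (\<lambda>i. 0) then 1 else (0::int))"
  have G: "?G \<in> ?B" using lvl_in_box[OF g] .
  have Z: "(\<lambda>i. 0) \<in> ?B" using zero_in_box[OF p] .
  have fin: "finite ?B" by (rule finite_box)
  have "Iw_mult p d (grp_minus_one p d g) r n c =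
    (\<Sum>a\<in>?B. \<Sum>b\<in>?B. if vmod p n (\<lambda>i. a i + b i) = c then ?gm a * r n b else 0) mod ?M"
    using c by (simp add: Iw_mult_def)
  also have "\<dots> = (\<Sum>a\<in>?B. \<Sum>b\<in>?B. if vmod p n (\<lambda>i. a i + b i) = c then ?del a * r n b else 0) mod ?M"
  proof (rule sum_mod_cong)
    fix a assume a: "a \<in> ?B"
    show "(\<Sum>b\<in>?B. if vmod p n (\<lambda>i. a i + b i) = c then ?gm a * r n b else 0) mod ?M =
          (\<Sum>b\<in>?B. if vmod p n (\<lambda>i. a i + b i) = c then ?del a * r n b else 0) mod ?M"
    proof (rule sum_mod_cong)
      fix b
      have "?gm a = ?del a mod ?M" using a by (simp add: grp_minus_one_def)
      then show "(if vmod p n (\<lambda>i. a i + b i) = c then ?gm a * r n b else 0) mod ?M =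
          (if vmod p n (\<lambda>i. a i + b i) = c then ?del a * r n b else 0) mod ?M"
        by (simp add: mod_mult_left_eq)
    qed
  qed
  also have "(\<Sum>a\<in>?B. \<Sum>b\<in>?B. if vmod p n (\<lambda>i. a i + b i) = c then ?del a * r n b else 0)
     = (\<Sum>a\<in>?B. ?del a * (\<Sum>b\<in>?B. if b = vmod p n (\<lambda>i. c i - a i) then r n b else 0))"
  proof (rule sum.cong[OF refl])
    fix a assume a: "a \<in> ?B"
    have "(\<Sum>b\<in>?B. if vmod p n (\<lambda>i. a i + b i) = c then ?del a * r n b else 0)
        = (\<Sum>b\<in>?B. ?del a * (if b = vmod p n (\<lambda>i. c i - a i) then r n b else 0))"
      by (rule sum.cong[OF refl]) (use vmod_add_iff[OF a _ c] in auto)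
    then show "(\<Sum>b\<in>?B. if vmod p n (\<lambda>i. a i + b i) = c then ?del a * r n b else 0)
     = ?del a * (\<Sum>b\<in>?B. if b = vmod p n (\<lambda>i. c i - a i) then r n b else 0)"
      by (simp add: sum_distrib_left)
  qed
  also have "\<dots> = (\<Sum>a\<in>?B. ?del a * r n (vmod p n (\<lambda>i. c i - a i)))"
  proof (rule sum.cong[OF refl])
    fix a assume a: "a \<in> ?B"
    have "vmod p n (\<lambda>i. c i - a i) \<in> ?B"
      using a c p by (intro vmod_in_box) (auto simp: box_def)
    then show "?del a * (\<Sum>b\<in>?B. if b = vmod p n (\<lambda>i. c i - a i) then r n b else 0) = ?del a * r n (vmod p n (\<lambda>i. c i - a i))"
      using fin by (simp add: sum.delta)
  qed
  also have "\<dots> = r n (vmod p n (\<lambda>i. c i - ?G i)) - r n (vmod p n (\<lambda>i. c i - 0))"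
  proof -
    have "(\<Sum>a\<in>?B. ?del a * r n (vmod p n (\<lambda>i. c i - a i))) =
      (\<Sum>a\<in>?B. (if a = ?G then r n (vmod p n (\<lambda>i. c i - a i)) else 0) -
                  (if a = (\<lambda>i. 0) then r n (vmod p n (\<lambda>i. c i - a i)) else 0))"
      by (rule sum.cong) (auto simp: left_diff_distrib)
    also have "\<dots> = r n (vmod p n (\<lambda>i. c i - ?G i)) - r n (vmod p n (\<lambda>i. c i - 0))"
      using G Z fin by (simp add: sum_subtractf sum.delta)
    finally show ?thesis .
  qed
  also have "vmod p n (\<lambda>i. c i - 0) = c" using vmod_box_id[OF c] by simp
  also have "vmod p n (\<lambda>i. c i - ?G i) = sh p n g c" by (simp add: sh_def lvl_def)
  finally show ?thesis .
qed

lemma Iw_sum_out: "c \<notin> box p d n \<Longrightarrow> Iw_sum p d f m n c = 0"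
  by (induction m) (auto simp: Iw_zero_def Iw_add_def)

lemma ideal_formula:
  assumes p: "prime p" and y: "\<forall>j<m. y j \<in> Xgrp p d" and c: "c \<in> box p d n"
  shows "Iw_sum p d (\<lambda>j. Iw_mult p d (grp_minus_one p d (y j)) (r j)) m n c
       = (\<Sum>j<m. r j n (sh p n (y j) c) - r j n c) mod int p ^ n"
  using y
proof (induction m)
  case 0
  then show ?case by (simp add: Iw_zero_def)
next
  case (Suc m)
  then show ?case using c
    by (simp add: Iw_add_def mult_formula[OF p _ c] mod_add_eq)
qed



definition fib :: "nat \<Rightarrow> nat \<Rightarrow> nat \<Rightarrow> nat \<Rightarrow> (nat \<Rightarrow> int) \<Rightarrow> (nat \<Rightarrow> int) set" where
  "fib p d N n c = {b \<in> box p d N. vmod p n b = c}"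

lemma mod_pow_le: "n \<le> N \<Longrightarrow> x mod (int p ^ N) mod (int p ^ n) = x mod (int p ^ n)"
  by (rule mod_mod_cancel) (rule le_imp_power_dvd)

lemma vmod_vmod: "n \<le> N \<Longrightarrow> vmod p n (vmod p N x) = vmod p n x"
  by (simp add: vmod_def mod_pow_le)

lemma padic_compat: assumes z: "z \<in> padic_int p" and nN: "n \<le> N" shows "z N mod (int p ^ n) = z n"
  using nN
proof (induction N rule: dec_induct)
  case base
  have "0 \<le> z n" "z n < int p ^ n" using z by (auto simp: padic_int_def)
  then show ?case by simp
next
  case (step N)
  have "z (Suc N) mod int p ^ n = z (Suc N) mod int p ^ N mod int p ^ n"
    using step(1) by (simp add: mod_pow_le)
  also have "\<dots> = z N mod int p ^ n" using z by (simp add: padic_int_def)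
  finally show ?case using step(3) by simp
qed

lemma Xgrp_compat: "g \<in> Xgrp p d \<Longrightarrow> n \<le> N \<Longrightarrow> g i N mod (int p ^ n) = g i n"
  by (cases "i < d") (auto simp: Xgrp_def padic_compat)

lemma vmod_sh: "g \<in> Xgrp p d \<Longrightarrow> n \<le> N \<Longrightarrow> vmod p n (sh p N g b) = sh p n g (vmod p n b)"
proof -
  assume g: "g \<in> Xgrp p d" and nN: "n \<le> N"
  have "(b i - g i N) mod int p ^ N mod int p ^ n = (b i mod int p ^ n - g i n) mod int p ^ n" for i
  proof -
    have "(b i - g i N) mod int p ^ N mod int p ^ n = (b i - g i N) mod int p ^ n"
      using nN by (simp add: mod_pow_le)
    also have "\<dots> = (b i mod int p ^ n - g i N mod int p ^ n) mod int p ^ n"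
      by (simp add: mod_diff_eq)
    also have "\<dots> = (b i mod int p ^ n - g i n) mod int p ^ n" using Xgrp_compat[OF g nN] by simp
    finally show ?thesis .
  qed
  then show ?thesis by (simp add: sh_def vmod_def)
qed

definition unsh :: "nat \<Rightarrow> nat \<Rightarrow> (nat \<Rightarrow> nat \<Rightarrow> int) \<Rightarrow> (nat \<Rightarrow> int) \<Rightarrow> (nat \<Rightarrow> int)" where
  "unsh p N g b = vmod p N (\<lambda>i. b i + g i N)"

lemma sh_unsh: "b \<in> box p d N \<Longrightarrow> sh p N g (unsh p N g b) = b"
proof -
  assume b: "b \<in> box p d N"
  have "((b i + g i N) mod int p ^ N - g i N) mod int p ^ N = b i" for i
  proof -
    have "((b i + g i N) mod int p ^ N - g i N) mod int p ^ N = b i mod int p ^ N"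
      by (simp add: mod_diff_left_eq)
    also have "\<dots> = b i" using vmod_box_id[OF b] by (simp add: vmod_def fun_eq_iff)
    finally show ?thesis .
  qed
  then show ?thesis by (simp add: sh_def unsh_def vmod_def)
qed

lemma unsh_sh: "b \<in> box p d N \<Longrightarrow> unsh p N g (sh p N g b) = b"
proof -
  assume b: "b \<in> box p d N"
  have "((b i - g i N) mod int p ^ N + g i N) mod int p ^ N = b i" for i
  proof -
    have "((b i - g i N) mod int p ^ N + g i N) mod int p ^ N = b i mod int p ^ N"
      by (simp add: mod_add_left_eq)
    also have "\<dots> = b i" using vmod_box_id[OF b] by (simp add: vmod_def fun_eq_iff)
    finally show ?thesis .
  qed
  then show ?thesis by (simp add: sh_def unsh_def vmod_def)
qed

lemma unsh_in_box: "prime p \<Longrightarrow> b \<in> box p d N \<Longrightarrow> g \<in> Xgrp p d \<Longrightarrow> unsh p N g b \<in> box p d N"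
  unfolding unsh_def by (intro vmod_in_box) (auto simp: box_def Xgrp_def)

lemma sh_inj: "inj_on (sh p N g) (box p d N)"
  by (metis inj_onI unsh_sh)

lemma sh_fib_bij:
  assumes p: "prime p" and g: "g \<in> Xgrp p d" and c: "c \<in> box p d n"
  shows "bij_betw (sh p (Suc n) g) (fib p d (Suc n) n c) (fib p d (Suc n) n (sh p n g c))"
proof -
  have sub: "fib p d (Suc n) n c \<subseteq> box p d (Suc n)" by (auto simp: fib_def)
  have "sh p (Suc n) g ` fib p d (Suc n) n c = fib p d (Suc n) n (sh p n g c)"
  proof
    show "sh p (Suc n) g ` fib p d (Suc n) n c \<subseteq> fib p d (Suc n) n (sh p n g c)"
      using sh_in_box[OF p _ g] vmod_sh[OF g, of n "Suc n"] by (auto simp: fib_def)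
  next
    show "fib p d (Suc n) n (sh p n g c) \<subseteq> sh p (Suc n) g ` fib p d (Suc n) n c"
    proof
      fix b assume b: "b \<in> fib p d (Suc n) n (sh p n g c)"
      then have bB: "b \<in> box p d (Suc n)" and bv: "vmod p n b = sh p n g c" by (auto simp: fib_def)
      let ?u = "unsh p (Suc n) g b"
      have uB: "?u \<in> box p d (Suc n)" using unsh_in_box[OF p bB g] .
      have "sh p n g (vmod p n ?u) = sh p n g c"
        using vmod_sh[OF g, of n "Suc n" ?u] sh_unsh[OF bB] bv by simp
      moreover have "vmod p n ?u \<in> box p d n"
        using uB p by (intro vmod_in_box) (auto simp: box_def)
      ultimately have "vmod p n ?u = c"
        using inj_onD[OF sh_inj, of p n g "vmod p n ?u" c] c by blast
      then have "?u \<in> fib p d (Suc n) n c" using uB by (simp add: fib_def)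
      then show "b \<in> sh p (Suc n) g ` fib p d (Suc n) n c"
        by (rule image_eqI[rotated]) (use sh_unsh[OF bB, of g] in auto)
    qed
  qed
  then show ?thesis using inj_on_subset[OF sh_inj sub] by (simp add: bij_betw_def)
qed

lemma fin_fib: "finite (fib p d N n c)"
  using finite_box[of p d N] by (simp add: fib_def)

lemma iterate_compat:
  fixes \<nu> :: elt
  assumes p: "prime p"
    and step: "\<And>n c. c \<in> box p d n \<Longrightarrow> \<nu> n c mod int p ^ n = (\<Sum>b\<in>fib p d (Suc n) n c. \<nu> (Suc n) b) mod int p ^ n"
    and c: "c \<in> box p d n" and nN: "n \<le> N"
  shows "\<nu> n c mod int p ^ n = (\<Sum>b\<in>fib p d N n c. \<nu> N b) mod int p ^ n"
  using nN
proof (induction N rule: dec_induct)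
  case base
  have "fib p d n n c = {c}" using vmod_box_id c by (auto simp: fib_def)
  then show ?case by simp
next
  case (step N)
  have sub: "vmod p N ` fib p d (Suc N) n c \<subseteq> fib p d N n c"
  proof
    fix x assume "x \<in> vmod p N ` fib p d (Suc N) n c"
    then obtain b where b: "b \<in> fib p d (Suc N) n c" and x: "x = vmod p N b" by blast
    have "x \<in> box p d N" unfolding x by (rule vmod_in_box[OF p]) (use b in \<open>auto simp: fib_def box_def\<close>)
    moreover have "vmod p n x = c" using b x step(1) by (simp add: fib_def vmod_vmod)
    ultimately show "x \<in> fib p d N n c" by (simp add: fib_def)
  qed
  have grp: "(\<Sum>b\<in>fib p d (Suc N) n c. \<nu> (Suc N) b) =
     (\<Sum>c'\<in>fib p d N n c. \<Sum>b\<in>{x\<in>fib p d (Suc N) n c. vmod p N x = c'}. \<nu> (Suc N) b)"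
    by (rule sum.group[OF fin_fib fin_fib sub, symmetric])
  have eq: "{x\<in>fib p d (Suc N) n c. vmod p N x = c'} = fib p d (Suc N) N c'" if "c' \<in> fib p d N n c" for c'
  proof -
    have c': "vmod p n c' = c" using that by (simp add: fib_def)
    have "vmod p n x = c" if "vmod p N x = c'" for x
      using vmod_vmod[OF step(1), of p x] that c' by simp
    then show ?thesis using c' by (auto simp: fib_def)
  qed
  have "(\<Sum>b\<in>fib p d (Suc N) n c. \<nu> (Suc N) b) mod int p ^ n =
     (\<Sum>c'\<in>fib p d N n c. \<Sum>b\<in>fib p d (Suc N) N c'. \<nu> (Suc N) b) mod int p ^ n"
    using grp eq by simp
  also have "\<dots> = (\<Sum>c'\<in>fib p d N n c. \<nu> N c') mod int p ^ n"
  proof (rule sum_mod_cong)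
    fix c' assume "c' \<in> fib p d N n c"
    then have "c' \<in> box p d N" by (simp add: fib_def)
    then have "\<nu> N c' mod int p ^ N = (\<Sum>b\<in>fib p d (Suc N) N c'. \<nu> (Suc N) b) mod int p ^ N"
      by (rule assms(2))
    then have "\<nu> N c' mod int p ^ N mod int p ^ n = (\<Sum>b\<in>fib p d (Suc N) N c'. \<nu> (Suc N) b) mod int p ^ N mod int p ^ n"
      by simp
    then show "(\<Sum>b\<in>fib p d (Suc N) N c'. \<nu> (Suc N) b) mod int p ^ n = \<nu> N c' mod int p ^ n"
      using step(1) by (simp add: mod_pow_le)
  qed
  finally show ?case using step(3) by simp
qed



definition rho :: "nat \<Rightarrow> nat \<Rightarrow> nat \<Rightarrow> (nat \<Rightarrow> nat \<Rightarrow> nat \<Rightarrow> int) \<Rightarrow> (nat \<Rightarrow> elt) \<Rightarrow> elt" where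
  "rho p d m y r = (\<lambda>n c. \<Sum>j<m. r j n (sh p n (y j) c) - r j n c)"

lemma ideal_rep:
  assumes p: "prime p" and y: "\<forall>j<d - 1. y j \<in> Xgrp p d" and mu: "\<mu> \<in> basis_ideal p d y"
  obtains r where "\<forall>j<d - 1. r j \<in> Iw p d"
    "\<And>n c. c \<in> box p d n \<Longrightarrow> \<mu> n c = rho p d (d - 1) y r n c mod int p ^ n"
proof -
  obtain r where r: "\<forall>j<d - 1. r j \<in> Iw p d"
    and mu': "\<mu> = Iw_sum p d (\<lambda>j. Iw_mult p d (grp_minus_one p d (y j)) (r j)) (d - 1)"
    using mu by (auto simp: basis_ideal_def)
  show ?thesis
    by (rule that[OF r]) (unfold mu' rho_def, rule ideal_formula[OF p y])
qed

lemma Iw_fib: "r \<in> Iw p d \<Longrightarrow> a \<in> box p d n \<Longrightarrow> r n a = (\<Sum>b\<in>fib p d (Suc n) n a. r (Suc n) b) mod int p ^ n"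
  unfolding Iw_def fib_def by blast

lemma mu_step:
  assumes p: "prime p" and y: "\<forall>j<d - 1. y j \<in> Xgrp p d"
    and r: "\<forall>j<d - 1. r j \<in> Iw p d"
    and mu: "\<And>n c. c \<in> box p d n \<Longrightarrow> \<mu> n c = rho p d (d - 1) y r n c mod int p ^ n"
    and c: "c \<in> box p d n"
  shows "\<mu> n c mod int p ^ n = (\<Sum>b\<in>fib p d (Suc n) n c. \<mu> (Suc n) b) mod int p ^ n"
proof -
  let ?M = "int p ^ n" and ?F = "fib p d (Suc n) n c" and ?m = "d - 1"
  have "(\<Sum>b\<in>?F. \<mu> (Suc n) b) mod ?M = (\<Sum>b\<in>?F. rho p d ?m y r (Suc n) b) mod ?M"
  proof (rule sum_mod_cong)
    fix b assume "b \<in> ?F"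
    then have "\<mu> (Suc n) b = rho p d ?m y r (Suc n) b mod int p ^ Suc n" using mu by (simp add: fib_def)
    moreover have "\<forall>x. x mod int p ^ Suc n mod ?M = x mod ?M" using mod_pow_le[of n "Suc n" _ p] by simp
    ultimately show "\<mu> (Suc n) b mod ?M = rho p d ?m y r (Suc n) b mod ?M" by simp
  qed
  also have "(\<Sum>b\<in>?F. rho p d ?m y r (Suc n) b) =
     (\<Sum>j<?m. (\<Sum>b\<in>?F. r j (Suc n) (sh p (Suc n) (y j) b)) - (\<Sum>b\<in>?F. r j (Suc n) b))"
    unfolding rho_def by (simp add: sum_subtractf sum.swap[of _ ?F])
  also have "\<dots> = (\<Sum>j<?m. (\<Sum>b\<in>fib p d (Suc n) n (sh p n (y j) c). r j (Suc n) b) - (\<Sum>b\<in>?F. r j (Suc n) b))"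
  proof (rule sum.cong[OF refl])
    fix j assume j: "j \<in> {..<?m}"
    have "(\<Sum>b\<in>?F. r j (Suc n) (sh p (Suc n) (y j) b)) = (\<Sum>b\<in>fib p d (Suc n) n (sh p n (y j) c). r j (Suc n) b)"
      by (rule sum.reindex_bij_betw[OF sh_fib_bij[OF p _ c]]) (use j y in auto)
    then show "(\<Sum>b\<in>?F. r j (Suc n) (sh p (Suc n) (y j) b)) - (\<Sum>b\<in>?F. r j (Suc n) b) =
      (\<Sum>b\<in>fib p d (Suc n) n (sh p n (y j) c). r j (Suc n) b) - (\<Sum>b\<in>?F. r j (Suc n) b)" by simp
  qed
  also have "\<dots> mod ?M = rho p d ?m y r n c mod ?M"
    unfolding rho_def
  proof (rule sum_mod_cong)
    fix j assume j: "j \<in> {..<?m}"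
    have yj: "y j \<in> Xgrp p d" using j y by auto
    have rj: "r j \<in> Iw p d" using j r by auto
    have e1: "r j n (sh p n (y j) c) = (\<Sum>b\<in>fib p d (Suc n) n (sh p n (y j) c). r j (Suc n) b) mod ?M"
      by (rule Iw_fib[OF rj sh_in_box[OF p c yj]])
    have e2: "r j n c = (\<Sum>b\<in>?F. r j (Suc n) b) mod ?M"
      by (rule Iw_fib[OF rj c])
    show "((\<Sum>b\<in>fib p d (Suc n) n (sh p n (y j) c). r j (Suc n) b) - (\<Sum>b\<in>?F. r j (Suc n) b)) mod ?M =
          (r j n (sh p n (y j) c) - r j n c) mod ?M"
      unfolding e1 e2 by (simp add: mod_diff_eq)
  qed
  also have "rho p d ?m y r n c mod ?M = \<mu> n c mod ?M" using mu[OF c] by simp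
  finally show ?thesis by simp
qed

lemma inv_sum:
  assumes p: "prime p" and y: "\<forall>j<d - 1. y j \<in> Xgrp p d"
    and mu: "\<mu> \<in> basis_ideal p d y"
    and S: "S \<subseteq> box p d N"
    and inv: "\<forall>j<d - 1. sh p N (y j) ` S \<subseteq> S"
  shows "(\<Sum>x\<in>S. \<mu> N x) mod int p ^ N = 0"
proof -
  obtain r where r: "\<forall>j<d - 1. r j \<in> Iw p d"
    and mur: "\<And>n c. c \<in> box p d n \<Longrightarrow> \<mu> n c = rho p d (d - 1) y r n c mod int p ^ n"
    using ideal_rep[OF p y mu] by blast
  have finS: "finite S" using finite_subset[OF S finite_box] .
  have "(\<Sum>x\<in>S. \<mu> N x) mod int p ^ N = (\<Sum>x\<in>S. rho p d (d - 1) y r N x) mod int p ^ N"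
    by (rule sum_mod_cong) (use S mur in auto)
  also have "(\<Sum>x\<in>S. rho p d (d - 1) y r N x) =
     (\<Sum>j<d - 1. (\<Sum>x\<in>S. r j N (sh p N (y j) x)) - (\<Sum>x\<in>S. r j N x))"
    unfolding rho_def by (simp add: sum_subtractf sum.swap[of _ S])
  also have "\<dots> = 0"
  proof (rule sum.neutral, rule ballI)
    fix j assume j: "j \<in> {..<d - 1}"
    have inj: "inj_on (sh p N (y j)) S" using inj_on_subset[OF sh_inj S] .
    have img: "sh p N (y j) ` S = S" using endo_inj_surj[OF finS _ inj] inv j by auto
    have "(\<Sum>x\<in>S. r j N (sh p N (y j) x)) = (\<Sum>x\<in>sh p N (y j) ` S. r j N x)"
      using sum.reindex[OF inj, of "r j N"] by simp
    then show "(\<Sum>x\<in>S. r j N (sh p N (y j) x)) - (\<Sum>x\<in>S. r j N x) = 0" using img by simp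
  qed
  finally show ?thesis by simp
qed



definition frame :: "nat \<Rightarrow> (nat \<Rightarrow> nat \<Rightarrow> int) \<Rightarrow> (nat \<Rightarrow> nat \<Rightarrow> int) \<Rightarrow> bool" where
  "frame d F E \<longleftrightarrow> (\<forall>i<d. \<forall>j<d. (\<Sum>l<d. F i l * E j l) = (if i = j then 1 else 0)) \<and>
                   (\<forall>i<d. \<forall>l<d. (\<Sum>m<d. E m i * F m l) = (if i = l then 1 else 0))"

definition swp :: "nat \<Rightarrow> nat \<Rightarrow> nat \<Rightarrow> nat" where
  "swp a b j = (if j = a then b else if j = b then a else j)"

definition fbasis :: "nat \<Rightarrow> nat \<Rightarrow> (nat \<Rightarrow> nat \<Rightarrow> int) \<Rightarrow> nat \<Rightarrow> (nat \<Rightarrow> nat \<Rightarrow> nat \<Rightarrow> int)" where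
  "fbasis p d E i0 = (\<lambda>j i n. if i < d then E (swp i0 (d - 1) j) i mod int p ^ n else 0)"

lemma swp_bij: "a < d \<Longrightarrow> b < d \<Longrightarrow> bij_betw (swp a b) {..<d} {..<d}"
  by (rule bij_betwI[where g="swp a b"]) (auto simp: swp_def)

lemma fbasis_Xgrp: "prime p \<Longrightarrow> fbasis p d E i0 j \<in> Xgrp p d"
  by (auto simp: fbasis_def Xgrp_def padic_int_def prime_gt_0_nat mod_pow_le[of n "Suc n" for n, simplified])

lemma fbasis_is_basis:
  assumes p: "prime p" and fr: "frame d F E" and i0: "i0 < d"
  shows "is_basis p d (fbasis p d E i0)"
  unfolding is_basis_def
proof (intro conjI allI ballI impI)
  fix j show "fbasis p d E i0 j \<in> Xgrp p d" by (rule fbasis_Xgrp[OF p])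
next
  fix n a assume a: "a \<in> box p d n"
  let ?s = "swp i0 (d - 1)" and ?M = "int p ^ n"
  define k where "k = (\<lambda>j. \<Sum>l<d. F (?s j) l * a l)"
  have bij: "bij_betw ?s {..<d} {..<d}" using swp_bij i0 by auto
  have "a i = vmod p n (\<lambda>i. \<Sum>j<d. k j * fbasis p d E i0 j i n) i" for i
  proof (cases "i < d")
    case True
    have "(\<Sum>j<d. k j * fbasis p d E i0 j i n) mod ?M = (\<Sum>j<d. k j * E (?s j) i) mod ?M"
      by (rule sum_mod_cong) (simp add: fbasis_def True mod_mult_right_eq)
    also have "(\<Sum>j<d. k j * E (?s j) i) = (\<Sum>j<d. (\<lambda>m. (\<Sum>l<d. F m l * a l) * E m i) (?s j))"
      by (simp add: k_def)
    also have "\<dots> = (\<Sum>m<d. (\<Sum>l<d. F m l * a l) * E m i)"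
      by (rule sum.reindex_bij_betw[OF bij])
    also have "\<dots> = (\<Sum>l<d. a l * (\<Sum>m<d. E m i * F m l))"
    proof -
      have "(\<Sum>m<d. (\<Sum>l<d. F m l * a l) * E m i) = (\<Sum>m<d. \<Sum>l<d. F m l * a l * E m i)"
        by (simp add: sum_distrib_right)
      also have "\<dots> = (\<Sum>l<d. \<Sum>m<d. F m l * a l * E m i)" by (rule sum.swap)
      also have "\<dots> = (\<Sum>l<d. a l * (\<Sum>m<d. E m i * F m l))"
        by (simp add: sum_distrib_left mult_ac)
      finally show ?thesis .
    qed
    also have "\<dots> = (\<Sum>l<d. if l = i then a l else 0)"
      using fr True unfolding frame_def by (intro sum.cong) auto
    also have "\<dots> = a i" using True by (simp add: sum.delta')
    finally show ?thesis using a True by (auto simp: vmod_def box_def)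
  next
    case False
    then show ?thesis using a by (simp add: vmod_def box_def fbasis_def)
  qed
  then show "\<exists>k. a = vmod p n (\<lambda>i. \<Sum>j<d. k j * fbasis p d E i0 j i n)" by blast
qed

definition inbox :: "nat \<Rightarrow> nat \<Rightarrow> (nat \<Rightarrow> nat \<Rightarrow> int) \<Rightarrow> (nat \<Rightarrow> int) \<Rightarrow> (nat \<Rightarrow> nat) \<Rightarrow> (nat \<Rightarrow> int) \<Rightarrow> bool" where
  "inbox p d F a k x \<longleftrightarrow> (\<forall>i<d. int p ^ k i dvd (\<Sum>l<d. F i l * (x l - a l)))"

lemma box_invariant:
  assumes p: "prime p" and fr: "frame d F E" and i0: "i0 < d"
    and k0: "\<forall>i<d. i \<noteq> i0 \<longrightarrow> k i = 0" and kN: "k i0 \<le> N"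
    and j: "j < d - 1" and x: "x \<in> box p d N" and xin: "inbox p d F a k x"
  shows "inbox p d F a k (sh p N (fbasis p d E i0 j) x)"
  unfolding inbox_def
proof (intro allI impI)
  fix i assume i: "i < d"
  let ?m = "swp i0 (d - 1) j" and ?M = "int p ^ N" and ?x' = "sh p N (fbasis p d E i0 j) x"
  show "int p ^ k i dvd (\<Sum>l<d. F i l * (?x' l - a l))"
  proof (cases "i = i0")
    case False
    then show ?thesis using k0 i by simp
  next
    case True
    have m: "?m < d" "?m \<noteq> i0" using j i0 by (auto simp: swp_def)
    have "(\<Sum>l<d. F i l * (?x' l - a l)) mod ?M = (\<Sum>l<d. F i l * (x l - E ?m l - a l)) mod ?M"
    proof (rule sum_mod_cong)
      fix l assume l: "l \<in> {..<d}"
      have "?x' l = (x l - E ?m l mod ?M) mod ?M" using l by (simp add: sh_def vmod_def fbasis_def)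
      then have "?x' l mod ?M = (x l - E ?m l) mod ?M" by (simp add: mod_diff_right_eq)
      then have "(?x' l - a l) mod ?M = (x l - E ?m l - a l) mod ?M"
        using mod_diff_left_eq[of "?x' l" ?M "a l"] mod_diff_left_eq[of "x l - E ?m l" ?M "a l"] by simp
      then show "F i l * (?x' l - a l) mod ?M = F i l * (x l - E ?m l - a l) mod ?M"
        using mod_mult_right_eq[of "F i l" "?x' l - a l" ?M] mod_mult_right_eq[of "F i l" "x l - E ?m l - a l" ?M] by simp
    qed
    moreover have "(\<Sum>l<d. F i l * (x l - E ?m l - a l)) = (\<Sum>l<d. F i l * (x l - a l)) - (\<Sum>l<d. F i l * E ?m l)"
    proof -
      have "(\<Sum>l<d. F i l * (x l - E ?m l - a l)) = (\<Sum>l<d. F i l * (x l - a l) - F i l * E ?m l)"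
        by (rule sum.cong) (auto simp: algebra_simps)
      then show ?thesis by (simp add: sum_subtractf)
    qed
    moreover have "(\<Sum>l<d. F i l * E ?m l) = 0" using fr i m True unfolding frame_def by auto
    ultimately have cong: "(\<Sum>l<d. F i l * (?x' l - a l)) mod ?M = (\<Sum>l<d. F i l * (x l - a l)) mod ?M" by simp
    have d1: "int p ^ k i dvd ?M" using kN True by (simp add: le_imp_power_dvd)
    have d2: "int p ^ k i dvd (\<Sum>l<d. F i l * (x l - a l))" using xin i by (simp add: inbox_def)
    have "?M dvd (\<Sum>l<d. F i l * (?x' l - a l)) - (\<Sum>l<d. F i l * (x l - a l))"
      using cong by (simp add: mod_eq_dvd_iff)
    then have "int p ^ k i dvd (\<Sum>l<d. F i l * (?x' l - a l)) - (\<Sum>l<d. F i l * (x l - a l))"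
      by (rule dvd_trans[OF d1])
    from dvd_add[OF this d2] show ?thesis by simp
  qed
qed

lemma base_case:
  assumes p: "prime p" and mu: "\<forall>y. is_basis p d y \<longrightarrow> \<mu> \<in> basis_ideal p d y"
    and fr: "frame d F E" and i0: "i0 < d"
    and k0: "\<forall>i<d. i \<noteq> i0 \<longrightarrow> k i = 0" and kN: "k i0 \<le> N"
  shows "(\<Sum>x\<in>box p d N. of_bool (inbox p d F a k x) * \<mu> N x) mod int p ^ N = 0"
proof -
  let ?y = "fbasis p d E i0" and ?S = "{x \<in> box p d N. inbox p d F a k x}"
  have "(\<Sum>x\<in>box p d N. of_bool (inbox p d F a k x) * \<mu> N x) = (\<Sum>x\<in>?S. \<mu> N x)"
    by (subst sum.inter_filter[OF finite_box]) (rule sum.cong, auto)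
  also have "\<dots> mod int p ^ N = 0"
  proof (rule inv_sum[OF p])
    show "\<forall>j<d - 1. ?y j \<in> Xgrp p d" using fbasis_Xgrp[OF p] by auto
    show "\<mu> \<in> basis_ideal p d ?y" using mu fbasis_is_basis[OF p fr i0] by auto
    show "?S \<subseteq> box p d N" by auto
    show "\<forall>j<d - 1. sh p N (?y j) ` ?S \<subseteq> ?S"
      using box_invariant[OF p fr i0 k0 kN] sh_in_box[OF p _ fbasis_Xgrp[OF p]] by auto
  qed
  finally show ?thesis .
qed



lemma small_mult:
  fixes t q :: int
  assumes "\<bar>q * t\<bar> < q" "q > 0"
  shows "t = 0"
proof (rule ccontr)
  assume "t \<noteq> 0"
  then have "1 \<le> \<bar>t\<bar>" by simp
  then have "q * 1 \<le> q * \<bar>t\<bar>" using assms(2) by (intro mult_left_mono) auto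
  then show False using assms by (simp add: abs_mult)
qed

lemma pencil:
  assumes p: "prime p" and v: "\<not> int p dvd v"
  shows "(\<Sum>c<p. of_bool (int p dvd u + int c * v)) = (1::int)"
proof -
  let ?f = "\<lambda>c. (u + int c * v) mod int p"
  have pp: "prime (int p)" using p by simp
  have p0: "int p > 0" using p prime_gt_0_nat by auto
  have uniq: "c1 = c2" if "c1 < p" "c2 < p" "int p dvd u + int c1 * v" "int p dvd u + int c2 * v" for c1 c2
  proof -
    have "int p dvd (u + int c1 * v) - (u + int c2 * v)" using dvd_diff[OF that(3) that(4)] .
    then have "int p dvd (int c1 - int c2) * v" by (simp add: algebra_simps)
    then have "int p dvd (int c1 - int c2)" using pp v by (simp add: prime_dvd_mult_iff)
    then obtain t where t: "int c1 - int c2 = int p * t" by (auto elim: dvdE)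
    have "\<bar>int c1 - int c2\<bar> < int p" using that by auto
    then have "t = 0" using t by (intro small_mult[OF _ p0]) simp
    then show ?thesis using t by simp
  qed
  have inj: "inj_on ?f {..<p}"
  proof (rule inj_onI)
    fix c1 c2 assume c: "c1 \<in> {..<p}" "c2 \<in> {..<p}" and e: "?f c1 = ?f c2"
    have "int p dvd (u + int c1 * v) - (u + int c2 * v)" using e by (simp add: mod_eq_dvd_iff)
    then have "int p dvd (int c1 - int c2) * v" by (simp add: algebra_simps)
    then have "int p dvd (int c1 - int c2)" using pp v by (simp add: prime_dvd_mult_iff)
    then obtain t where t: "int c1 - int c2 = int p * t" by (auto elim: dvdE)
    have "\<bar>int c1 - int c2\<bar> < int p" using c by auto
    then have "t = 0" using t by (intro small_mult[OF _ p0]) simp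
    then show "c1 = c2" using t by simp
  qed
  have sub: "?f ` {..<p} \<subseteq> {0..<int p}" using p0 by auto
  have "card (?f ` {..<p}) = card {0..<int p}" using card_image[OF inj] by simp
  then have "?f ` {..<p} = {0..<int p}" using card_subset_eq[OF _ sub] by simp
  then have "0 \<in> ?f ` {..<p}" using p0 by simp
  then obtain c0 where c0': "c0 \<in> {..<p}" "0 = ?f c0" by (rule imageE)
  then have c0: "c0 < p" "?f c0 = 0" by simp_all
  have c0d: "int p dvd u + int c0 * v" using c0 by (simp add: dvd_eq_mod_eq_0)
  have "(\<Sum>c<p. of_bool (int p dvd u + int c * v)) = (\<Sum>c<p. if c = c0 then 1 else (0::int))"
  proof (rule sum.cong[OF refl])
    fix c assume c: "c \<in> {..<p}"
    show "of_bool (int p dvd u + int c * v) = (if c = c0 then 1 else (0::int))"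
    proof (cases "c = c0")
      case True then show ?thesis using c0d by simp
    next
      case False
      then have "\<not> int p dvd u + int c * v" using uniq[of c c0] c c0(1) c0d by auto
      then show ?thesis using False by simp
    qed
  qed
  also have "\<dots> = 1" using c0 by simp
  finally show ?thesis .
qed


lemma int_ident:
  fixes u v :: int
  assumes p: "prime p" and k: "1 \<le> k2" "k2 \<le> k1"
  shows "int p * of_bool (int p ^ k1 dvd u \<and> int p ^ k2 dvd v) =
    (\<Sum>c<p. of_bool (int p ^ k1 dvd u + int c * int p ^ (k1 - k2) * v \<and> int p ^ (k2 - 1) dvd v))
    + of_bool (int p ^ (k1 - 1) dvd u \<and> int p ^ k2 dvd v)
    - of_bool (int p ^ (k1 - 1) dvd u \<and> int p ^ (k2 - 1) dvd v)"
proof -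
  let ?P = "int p"
  have P0: "?P \<noteq> 0" using p by auto
  have pg: "p > 0" using p prime_gt_0_nat by blast
  have e1: "?P ^ k1 = ?P ^ (k1 - 1) * ?P" using k by (metis Suc_diff_le diff_Suc_1 le_trans power_Suc2)
  have e2: "?P ^ k2 = ?P ^ (k2 - 1) * ?P" using k by (metis Suc_diff_le diff_Suc_1 power_Suc2)
  have e3: "?P ^ (k1 - k2) * ?P ^ (k2 - 1) = ?P ^ (k1 - 1)" using k by (simp add: power_add[symmetric])
  have d1: "?P ^ (k1 - 1) dvd ?P ^ k1" using e1 by simp
  have d2: "?P ^ (k2 - 1) dvd ?P ^ k2" using e2 by simp
  show ?thesis
  proof (cases "?P ^ (k2 - 1) dvd v")
    case False
    then have "\<not> ?P ^ k2 dvd v" using d2 dvd_trans by blast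
    then show ?thesis using False by simp
  next
    case vT: True
    then obtain v' where v': "v = ?P ^ (k2 - 1) * v'" by (auto elim: dvdE)
    have sv: "int c * ?P ^ (k1 - k2) * v = ?P ^ (k1 - 1) * (int c * v')" for c
      using e3 v' by (simp add: mult_ac)
    show ?thesis
    proof (cases "?P ^ (k1 - 1) dvd u")
      case False
      then have nu: "\<not> ?P ^ k1 dvd u" using d1 dvd_trans by blast
      have "\<not> ?P ^ k1 dvd u + int c * ?P ^ (k1 - k2) * v" for c
      proof
        assume "?P ^ k1 dvd u + int c * ?P ^ (k1 - k2) * v"
        then have "?P ^ (k1 - 1) dvd u + ?P ^ (k1 - 1) * (int c * v')" using d1 sv dvd_trans by metis
        then have "?P ^ (k1 - 1) dvd u" by (simp add: dvd_add_left_iff)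
        then show False using False by simp
      qed
      then show ?thesis using False nu by simp
    next
      case uT: True
      then obtain u' where u': "u = ?P ^ (k1 - 1) * u'" by (auto elim: dvdE)
      have Q0: "?P ^ (k1 - 1) \<noteq> 0" "?P ^ (k2 - 1) \<noteq> 0" using P0 by auto
      have h1: "?P ^ k1 dvd u \<longleftrightarrow> ?P dvd u'" unfolding e1 u' using Q0 pg by simp
      have h2: "?P ^ k2 dvd v \<longleftrightarrow> ?P dvd v'" unfolding e2 v' using Q0 pg by simp
      have h3: "?P ^ k1 dvd u + int c * ?P ^ (k1 - k2) * v \<longleftrightarrow> ?P dvd u' + int c * v'" for c
      proof -
        have "u + int c * ?P ^ (k1 - k2) * v = ?P ^ (k1 - 1) * (u' + int c * v')"
          using sv u' by (simp add: algebra_simps)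
        then show ?thesis unfolding e1 using Q0 pg by simp
      qed
      show ?thesis
      proof (cases "?P dvd v'")
        case True
        have "(\<Sum>c<p. of_bool (?P ^ k1 dvd u + int c * ?P ^ (k1 - k2) * v \<and> ?P ^ (k2 - 1) dvd v))
            = (\<Sum>c<p. (of_bool (?P dvd u') :: int))"
        proof (rule sum.cong[OF refl])
          fix c
          have "?P dvd u' + int c * v' \<longleftrightarrow> ?P dvd u'" using True by (simp add: dvd_add_left_iff)
          then show "of_bool (?P ^ k1 dvd u + int c * ?P ^ (k1 - k2) * v \<and> ?P ^ (k2 - 1) dvd v) = (of_bool (?P dvd u') :: int)"
            using h3 vT by simp
        qed
        then show ?thesis using h1 h2 True uT vT by simp
      next
        case False
        have "(\<Sum>c<p. of_bool (?P ^ k1 dvd u + int c * ?P ^ (k1 - k2) * v \<and> ?P ^ (k2 - 1) dvd v))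
            = (\<Sum>c<p. (of_bool (?P dvd u' + int c * v') :: int))"
          using h3 vT by simp
        also have "\<dots> = 1" by (rule pencil[OF p False])
        finally show ?thesis using h1 h2 False uT vT by simp
      qed
    qed
  qed
qed




lemma frame_rowop:
  assumes fr: "frame d F E" and ij: "i < d" "j < d" "i \<noteq> j"
  shows "frame d (F(i := \<lambda>l. F i l + t * F j l)) (E(j := \<lambda>l. E j l - t * E i l))"
  unfolding frame_def
proof (intro conjI allI impI)
  let ?F = "F(i := \<lambda>l. F i l + t * F j l)" and ?E = "E(j := \<lambda>l. E j l - t * E i l)"
  have o: "\<And>a b. a < d \<Longrightarrow> b < d \<Longrightarrow> (\<Sum>l<d. F a l * E b l) = (if a = b then 1 else 0)"
    using fr by (simp add: frame_def)
  have c: "\<And>r l. r < d \<Longrightarrow> l < d \<Longrightarrow> (\<Sum>m<d. E m r * F m l) = (if r = l then 1 else 0)"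
    using fr by (simp add: frame_def)
  fix a b assume a: "a < d" and b: "b < d"
  have pw: "?F a l * ?E b l = F a l * E b l + (if a = i then t * (F j l * E b l) else 0)
      - (if b = j then t * (F a l * E i l) else 0) - (if a = i \<and> b = j then t * t * (F j l * E i l) else 0)" for l
    using ij by (auto simp: algebra_simps)
  have "(\<Sum>l<d. ?F a l * ?E b l) = (\<Sum>l<d. F a l * E b l) + (if a = i then t * (\<Sum>l<d. F j l * E b l) else 0)
      - (if b = j then t * (\<Sum>l<d. F a l * E i l) else 0) - (if a = i \<and> b = j then t * t * (\<Sum>l<d. F j l * E i l) else 0)"
    unfolding pw by (simp add: sum.distrib sum_subtractf sum_distrib_left)
  also have "\<dots> = (if a = b then 1 else 0)"
    using o[OF a b] o[OF ij(2) b] o[OF a ij(1)] o[OF ij(2) ij(1)] ij by auto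
  finally show "(\<Sum>l<d. ?F a l * ?E b l) = (if a = b then 1 else 0)" .
next
  let ?F = "F(i := \<lambda>l. F i l + t * F j l)" and ?E = "E(j := \<lambda>l. E j l - t * E i l)"
  have c: "\<And>r l. r < d \<Longrightarrow> l < d \<Longrightarrow> (\<Sum>m<d. E m r * F m l) = (if r = l then 1 else 0)"
    using fr by (simp add: frame_def)
  fix r l assume r: "r < d" and l: "l < d"
  have pw: "?E m r * ?F m l = E m r * F m l + (if m = i then t * E i r * F j l else 0)
      - (if m = j then t * E i r * F j l else 0)" for m
    using ij by (auto simp: algebra_simps)
  have "(\<Sum>m<d. ?E m r * ?F m l) = (\<Sum>m<d. E m r * F m l) + (\<Sum>m<d. if m = i then t * E i r * F j l else 0)
      - (\<Sum>m<d. if m = j then t * E i r * F j l else 0)"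
    unfolding pw by (simp add: sum.distrib sum_subtractf)
  also have "\<dots> = (if r = l then 1 else 0)" using c[OF r l] ij by simp
  finally show "(\<Sum>m<d. ?E m r * ?F m l) = (if r = l then 1 else 0)" .
qed

definition phi :: "nat \<Rightarrow> (nat \<Rightarrow> nat \<Rightarrow> int) \<Rightarrow> (nat \<Rightarrow> int) \<Rightarrow> nat \<Rightarrow> (nat \<Rightarrow> int) \<Rightarrow> int" where
  "phi d F a i x = (\<Sum>l<d. F i l * (x l - a l))"

lemma inbox_split:
  assumes "i < d" "j < d" "i \<noteq> j"
  shows "inbox p d F a k x \<longleftrightarrow> (\<forall>l<d. l \<noteq> i \<and> l \<noteq> j \<longrightarrow> int p ^ k l dvd phi d F a l x)
     \<and> int p ^ k i dvd phi d F a i x \<and> int p ^ k j dvd phi d F a j x"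
  using assms unfolding inbox_def phi_def by auto

lemma pointwise:
  assumes p: "prime p" and ij: "i < d" "j < d" "i \<noteq> j" and k: "1 \<le> k j" "k j \<le> k i"
  shows "int p * of_bool (inbox p d F a k x) =
    (\<Sum>c<p. of_bool (inbox p d (F(i := \<lambda>l. F i l + (int c * int p ^ (k i - k j)) * F j l)) a (k(j := k j - 1)) x))
    + of_bool (inbox p d F a (k(i := k i - 1)) x) - of_bool (inbox p d F a (k(i := k i - 1, j := k j - 1)) x)"
proof -
  let ?P = "int p" and ?e = "k i - k j"
  let ?Q = "\<forall>l<d. l \<noteq> i \<and> l \<noteq> j \<longrightarrow> ?P ^ k l dvd phi d F a l x"
  let ?u = "phi d F a i x" and ?v = "phi d F a j x"
  have phic: "phi d (F(i := \<lambda>l. F i l + (int c * ?P ^ ?e) * F j l)) a i x = ?u + int c * ?P ^ ?e * ?v" for c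
  proof -
    have "phi d (F(i := \<lambda>l. F i l + (int c * ?P ^ ?e) * F j l)) a i x
        = (\<Sum>l<d. F i l * (x l - a l) + (int c * ?P ^ ?e) * (F j l * (x l - a l)))"
      unfolding phi_def by (rule sum.cong) (auto simp: algebra_simps)
    then show ?thesis by (simp add: sum.distrib sum_distrib_left phi_def mult.assoc)
  qed
  have phio: "phi d (F(i := f')) a l x = phi d F a l x" if "l \<noteq> i" for l f'
    using that by (simp add: phi_def)
  have Qc: "(\<forall>l<d. l \<noteq> i \<and> l \<noteq> j \<longrightarrow> ?P ^ (k(j := k j - 1)) l dvd phi d (F(i := f')) a l x) \<longleftrightarrow> ?Q" for f'
    using phio by auto
  have Q1: "(\<forall>l<d. l \<noteq> i \<and> l \<noteq> j \<longrightarrow> ?P ^ (k(i := k i - 1)) l dvd phi d F a l x) \<longleftrightarrow> ?Q"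
    by auto
  have Q2: "(\<forall>l<d. l \<noteq> i \<and> l \<noteq> j \<longrightarrow> ?P ^ (k(i := k i - 1, j := k j - 1)) l dvd phi d F a l x) \<longleftrightarrow> ?Q"
    by auto
  note spl = inbox_split[OF ij]
  have ic: "inbox p d (F(i := \<lambda>l. F i l + (int c * ?P ^ ?e) * F j l)) a (k(j := k j - 1)) x \<longleftrightarrow>
      ?Q \<and> ?P ^ k i dvd ?u + int c * ?P ^ ?e * ?v \<and> ?P ^ (k j - 1) dvd ?v" for c
    unfolding spl Qc phic using ij phio[of j] by auto
  have i0: "inbox p d F a k x \<longleftrightarrow> ?Q \<and> ?P ^ k i dvd ?u \<and> ?P ^ k j dvd ?v"
    unfolding spl by simp
  have i1: "inbox p d F a (k(i := k i - 1)) x \<longleftrightarrow> ?Q \<and> ?P ^ (k i - 1) dvd ?u \<and> ?P ^ k j dvd ?v"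
    unfolding spl Q1 using ij by auto
  have i2: "inbox p d F a (k(i := k i - 1, j := k j - 1)) x \<longleftrightarrow> ?Q \<and> ?P ^ (k i - 1) dvd ?u \<and> ?P ^ (k j - 1) dvd ?v"
    unfolding spl Q2 using ij by auto
  show ?thesis
  proof (cases ?Q)
    case False
    then have qf: "?Q = False" by simp
    show ?thesis unfolding ic i0 i1 i2 qf by simp
  next
    case True
    then show ?thesis unfolding ic i0 i1 i2 using int_ident[OF p k, of ?u ?v] by simp
  qed
qed



definition bsum :: "nat \<Rightarrow> nat \<Rightarrow> (nat \<Rightarrow> int) set \<Rightarrow> ((nat \<Rightarrow> int) \<Rightarrow> int) \<Rightarrow> (nat \<Rightarrow> nat \<Rightarrow> int) \<Rightarrow> (nat \<Rightarrow> int) \<Rightarrow> (nat \<Rightarrow> nat) \<Rightarrow> int" where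
  "bsum p d B f F a k = (\<Sum>x\<in>B. of_bool (inbox p d F a k x) * f x)"

lemma bsum_split:
  assumes p: "prime p" and ij: "i < d" "j < d" "i \<noteq> j" and k: "1 \<le> k j" "k j \<le> k i"
  shows "int p * bsum p d B f F a k =
    (\<Sum>c<p. bsum p d B f (F(i := \<lambda>l. F i l + (int c * int p ^ (k i - k j)) * F j l)) a (k(j := k j - 1)))
    + bsum p d B f F a (k(i := k i - 1)) - bsum p d B f F a (k(i := k i - 1, j := k j - 1))"
proof -
  let ?Fc = "\<lambda>c. F(i := \<lambda>l. F i l + (int c * int p ^ (k i - k j)) * F j l)"
  let ?kc = "k(j := k j - 1)" and ?k1 = "k(i := k i - 1)" and ?k2 = "k(i := k i - 1, j := k j - 1)"
  have "int p * bsum p d B f F a k = (\<Sum>x\<in>B. (int p * of_bool (inbox p d F a k x)) * f x)"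
    by (simp add: bsum_def sum_distrib_left mult.assoc)
  also have "\<dots> = (\<Sum>x\<in>B. ((\<Sum>c<p. of_bool (inbox p d (?Fc c) a ?kc x)) + of_bool (inbox p d F a ?k1 x)
        - of_bool (inbox p d F a ?k2 x)) * f x)"
    by (rule sum.cong[OF refl]) (simp only: pointwise[OF p ij k])
  also have "\<dots> = (\<Sum>x\<in>B. \<Sum>c<p. of_bool (inbox p d (?Fc c) a ?kc x) * f x) + (\<Sum>x\<in>B. of_bool (inbox p d F a ?k1 x) * f x)
        - (\<Sum>x\<in>B. of_bool (inbox p d F a ?k2 x) * f x)"
    by (simp add: ring_distribs sum.distrib sum_subtractf sum_distrib_right)
  also have "(\<Sum>x\<in>B. \<Sum>c<p. of_bool (inbox p d (?Fc c) a ?kc x) * f x) = (\<Sum>c<p. \<Sum>x\<in>B. of_bool (inbox p d (?Fc c) a ?kc x) * f x)"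
    by (rule sum.swap)
  finally show ?thesis by (simp only: bsum_def)
qed

lemma sum_less_upd:
  fixes k :: "nat \<Rightarrow> nat"
  assumes "j < d" "k' j < k j" "\<forall>i<d. k' i \<le> k i"
  shows "(\<Sum>i<d. k' i) < (\<Sum>i<d. k i)"
  using assms by (intro sum_strict_mono_ex1) auto

lemma main_ind:
  fixes f :: "(nat \<Rightarrow> int) \<Rightarrow> int"
  assumes p: "prime p" and d0: "0 < d"
    and base: "\<And>F E k i0. frame d F E \<Longrightarrow> i0 < d \<Longrightarrow> (\<forall>i<d. i \<noteq> i0 \<longrightarrow> k i = 0) \<Longrightarrow> k i0 \<le> N \<Longrightarrow>
        bsum p d B f F a k mod int p ^ N = 0"
  shows "frame d F E \<Longrightarrow> (\<forall>i<d. k i \<le> N) \<Longrightarrow> (\<Sum>i<d. k i) \<le> T \<Longrightarrow>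
      (int p ^ T * bsum p d B f F a k) mod int p ^ N = 0"
proof (induction T arbitrary: F E k)
  case 0
  then have "\<forall>i<d. k i = 0" by auto
  then have z: "\<forall>i<d. i \<noteq> 0 \<longrightarrow> k i = 0" "k 0 \<le> N" using d0 by auto
  have "bsum p d B f F a k mod int p ^ N = 0" by (rule base[OF 0(1) d0 z])
  then show ?case by simp
next
  case (Suc T)
  show ?case
  proof (cases "\<exists>i0<d. \<forall>i<d. i \<noteq> i0 \<longrightarrow> k i = 0")
    case True
    then obtain i0 where "i0 < d" "\<forall>i<d. i \<noteq> i0 \<longrightarrow> k i = 0" by blast
    then have "bsum p d B f F a k mod int p ^ N = 0" using base[OF Suc(2)] Suc(3) by blast
    then show ?thesis by (metis mod_mult_right_eq mult_zero_right mod_0)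
  next
    case False
    then obtain i where i: "i < d" "i \<noteq> 0" "k i \<noteq> 0" using d0 by blast
    from False obtain j where j: "j < d" "j \<noteq> i" "k j \<noteq> 0" using i(1) by blast
    obtain i1 j1 where ij: "i1 < d" "j1 < d" "i1 \<noteq> j1" and kk: "1 \<le> k j1" "k j1 \<le> k i1"
    proof (cases "k j \<le> k i")
      case True then show ?thesis using that[of i j] i j by auto
    next
      case False then show ?thesis using that[of j i] i j by auto
    qed
    let ?e = "k i1 - k j1"
    let ?Fc = "\<lambda>c. F(i1 := \<lambda>l. F i1 l + (int c * int p ^ ?e) * F j1 l)"
    let ?Ec = "\<lambda>c. E(j1 := \<lambda>l. E j1 l - (int c * int p ^ ?e) * E i1 l)"
    let ?kc = "k(j1 := k j1 - 1)" and ?k1 = "k(i1 := k i1 - 1)" and ?k2 = "k(i1 := k i1 - 1, j1 := k j1 - 1)"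
    let ?M = "int p ^ N"
    have frc: "frame d (?Fc c) (?Ec c)" for c by (rule frame_rowop[OF Suc(2) ij])
    have lc: "(\<Sum>i<d. ?kc i) \<le> T"
    proof -
      have "\<forall>i<d. ?kc i \<le> k i" by simp
      then have "(\<Sum>i<d. ?kc i) < (\<Sum>i<d. k i)" using sum_less_upd[of j1 d ?kc k] ij kk by simp
      then show ?thesis using Suc(4) by simp
    qed
    have l1: "(\<Sum>i<d. ?k1 i) \<le> T"
    proof -
      have "\<forall>i<d. ?k1 i \<le> k i" by simp
      then have "(\<Sum>i<d. ?k1 i) < (\<Sum>i<d. k i)" using sum_less_upd[of i1 d ?k1 k] ij kk by simp
      then show ?thesis using Suc(4) by simp
    qed
    have l2: "(\<Sum>i<d. ?k2 i) \<le> T"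
    proof -
      have "\<forall>i<d. ?k2 i \<le> k i" by simp
      then have "(\<Sum>i<d. ?k2 i) < (\<Sum>i<d. k i)" using sum_less_upd[of i1 d ?k2 k] ij kk by simp
      then show ?thesis using Suc(4) by simp
    qed
    have Nc: "\<forall>i<d. ?kc i \<le> N" "\<forall>i<d. ?k1 i \<le> N" "\<forall>i<d. ?k2 i \<le> N" using Suc(3) by (auto simp: le_diff_conv)
    have IHc: "(int p ^ T * bsum p d B f (?Fc c) a ?kc) mod ?M = 0" for c
      by (rule Suc.IH[OF frc Nc(1) lc])
    have IH1: "(int p ^ T * bsum p d B f F a ?k1) mod ?M = 0" by (rule Suc.IH[OF Suc(2) Nc(2) l1])
    have IH2: "(int p ^ T * bsum p d B f F a ?k2) mod ?M = 0" by (rule Suc.IH[OF Suc(2) Nc(3) l2])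
    have "int p ^ Suc T * bsum p d B f F a k = int p ^ T * (int p * bsum p d B f F a k)" by simp
    also have "\<dots> = (\<Sum>c<p. int p ^ T * bsum p d B f (?Fc c) a ?kc) + int p ^ T * bsum p d B f F a ?k1
        - int p ^ T * bsum p d B f F a ?k2"
      unfolding bsum_split[OF p ij kk] by (simp add: ring_distribs sum_distrib_left)
    finally have eq: "int p ^ Suc T * bsum p d B f F a k = \<dots>" .
    have s0: "(\<Sum>c<p. int p ^ T * bsum p d B f (?Fc c) a ?kc) mod ?M = 0"
    proof -
      have "(\<Sum>c<p. int p ^ T * bsum p d B f (?Fc c) a ?kc) mod ?M = (\<Sum>c<p. (int p ^ T * bsum p d B f (?Fc c) a ?kc) mod ?M) mod ?M"
        by (simp add: mod_sum_eq)
      also have "\<dots> = 0" using IHc by simp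
      finally show ?thesis .
    qed
    show ?thesis unfolding eq
      using s0 IH1 IH2 by (metis (no_types, lifting) mod_add_eq mod_diff_eq add_0 diff_zero mod_0)
  qed
qed



lemma Iw_zero_in: "prime p \<Longrightarrow> Iw_zero \<in> Iw p d"
  by (auto simp: Iw_def Iw_zero_def prime_gt_0_nat)

lemma Iw_mult_zero: "Iw_mult p d g Iw_zero = Iw_zero"
  unfolding Iw_mult_def Iw_zero_def by (intro ext) (simp cong: if_cong)

lemma Iw_add_zero: "Iw_add p d Iw_zero Iw_zero = Iw_zero"
  unfolding Iw_add_def Iw_zero_def by (intro ext) simp

lemma Iw_sum_zero: "Iw_sum p d (\<lambda>j. Iw_mult p d (g j) Iw_zero) m = Iw_zero"
  by (induction m) (simp_all add: Iw_mult_zero Iw_add_zero)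

lemma zero_in_ideal: "prime p \<Longrightarrow> Iw_zero \<in> basis_ideal p d y"
  unfolding basis_ideal_def
  by (rule CollectI, rule exI[of _ "\<lambda>j. Iw_zero"]) (simp add: Iw_zero_in Iw_sum_zero)

definition idm :: "nat \<Rightarrow> nat \<Rightarrow> int" where
  "idm i l = (if i = l then 1 else 0)"

lemma idm_sum: "i < d \<Longrightarrow> (\<Sum>l<d. idm i l * f l) = f i"
proof -
  assume i: "i < d"
  have "(\<Sum>l<d. idm i l * f l) = (\<Sum>l<d. if l = i then f l else 0)"
    by (rule sum.cong) (auto simp: idm_def)
  also have "\<dots> = f i" using i by simp
  finally show ?thesis .
qed

lemma idm_sum2: "i < d \<Longrightarrow> (\<Sum>l<d. f l * idm l i) = f i"
proof -
  assume i: "i < d"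
  have "(\<Sum>l<d. f l * idm l i) = (\<Sum>l<d. if l = i then f l else 0)"
    by (rule sum.cong) (auto simp: idm_def)
  also have "\<dots> = f i" using i by simp
  finally show ?thesis .
qed

lemma frame_id: "frame d idm idm"
proof -
  have "(\<Sum>l<d. idm i l * idm j l) = (if i = j then 1 else 0)" if "i < d" for i j
    using idm_sum[OF that, of "idm j"] by (simp add: idm_def)
  moreover have "(\<Sum>m<d. idm m i * idm m l) = (if i = l then 1 else 0)" if "l < d" for i l
  proof -
    have "(\<Sum>m<d. idm m i * idm m l) = (\<Sum>m<d. idm l m * idm i m)"
      by (rule sum.cong) (auto simp: idm_def)
    then show ?thesis using idm_sum[OF that, of "idm i"] by (simp add: idm_def)
  qed
  ultimately show ?thesis unfolding frame_def by simp
qed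

lemma fib_iff:
  assumes x: "x \<in> box p d N" and c: "c \<in> box p d n"
  shows "(vmod p n x = c) \<longleftrightarrow> (\<forall>i<d. int p ^ n dvd x i - c i)"
proof -
  have "(x i mod int p ^ n = c i) \<longleftrightarrow> int p ^ n dvd x i - c i" if "i < d" for i
  proof -
    have "c i mod int p ^ n = c i" using c that by (simp add: box_def)
    then show ?thesis by (metis mod_eq_dvd_iff)
  qed
  moreover have "x i mod int p ^ n = c i" if "\<not> i < d" for i using x c that by (simp add: box_def)
  ultimately show ?thesis unfolding vmod_def fun_eq_iff by (metis)
qed

theorem corollary7:
  fixes p d :: nat
  assumes "prime p" and "d \<ge> 2"
  shows "(\<Inter>y\<in>{y. is_basis p d y}. basis_ideal p d y) = {Iw_zero}"
proof
  show "{Iw_zero} \<subseteq> (\<Inter>y\<in>{y. is_basis p d y}. basis_ideal p d y)"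
    using zero_in_ideal[OF assms(1)] by auto
next
  note p = assms(1)
  have d0: "0 < d" using assms(2) by simp
  show "(\<Inter>y\<in>{y. is_basis p d y}. basis_ideal p d y) \<subseteq> {Iw_zero}"
  proof
    fix \<mu> assume "\<mu> \<in> (\<Inter>y\<in>{y. is_basis p d y}. basis_ideal p d y)"
    then have mu: "\<forall>y. is_basis p d y \<longrightarrow> \<mu> \<in> basis_ideal p d y" by auto
    let ?y = "fbasis p d idm (d - 1)"
    have y: "\<forall>j<d - 1. ?y j \<in> Xgrp p d" using fbasis_Xgrp[OF p] by auto
    have muy: "\<mu> \<in> basis_ideal p d ?y" using mu fbasis_is_basis[OF p frame_id, of "d - 1"] d0 by auto
    obtain r where r: "\<forall>j<d - 1. r j \<in> Iw p d"
      and mur: "\<And>n c. c \<in> box p d n \<Longrightarrow> \<mu> n c = rho p d (d - 1) ?y r n c mod int p ^ n"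
      using ideal_rep[OF p y muy] by blast
    have out: "\<mu> n c = 0" if "c \<notin> box p d n" for n c
    proof -
      obtain r' where "\<mu> = Iw_sum p d (\<lambda>j. Iw_mult p d (grp_minus_one p d (?y j)) (r' j)) (d - 1)"
        using muy by (auto simp: basis_ideal_def)
      then show ?thesis using Iw_sum_out[OF that] by simp
    qed
    have inb: "\<mu> n c = 0" if c: "c \<in> box p d n" for n c
    proof -
      define N where "N = n + d * n"
      have nN: "n \<le> N" by (simp add: N_def)
      have comp: "\<mu> n c mod int p ^ n = (\<Sum>b\<in>fib p d N n c. \<mu> N b) mod int p ^ n"
        by (rule iterate_compat[OF p _ c nN]) (rule mu_step[OF p y r mur])
      have base: "bsum p d (box p d N) (\<mu> N) F c k mod int p ^ N = 0"
        if "frame d F E" "i0 < d" "\<forall>i<d. i \<noteq> i0 \<longrightarrow> k i = 0" "k i0 \<le> N" for F E k i0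
        unfolding bsum_def by (rule base_case[OF p mu that])
      have mi: "(int p ^ (d * n) * bsum p d (box p d N) (\<mu> N) idm c (\<lambda>_. n)) mod int p ^ N = 0"
        by (rule main_ind[OF p d0 base frame_id]) (auto simp: N_def)
      have "bsum p d (box p d N) (\<mu> N) idm c (\<lambda>_. n) = (\<Sum>b\<in>fib p d N n c. \<mu> N b)"
      proof -
        have "inbox p d idm c (\<lambda>_. n) x \<longleftrightarrow> (\<forall>i<d. int p ^ n dvd x i - c i)" for x
          unfolding inbox_def by (simp add: idm_sum)
        then have "bsum p d (box p d N) (\<mu> N) idm c (\<lambda>_. n) = (\<Sum>x\<in>box p d N. if vmod p n x = c then \<mu> N x else 0)"
          unfolding bsum_def using fib_iff[OF _ c] by (intro sum.cong) auto
        also have "\<dots> = (\<Sum>b\<in>fib p d N n c. \<mu> N b)"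
          unfolding fib_def by (simp add: sum.inter_filter[OF finite_box])
        finally show ?thesis .
      qed
      then have "int p ^ N dvd int p ^ (d * n) * (\<Sum>b\<in>fib p d N n c. \<mu> N b)"
        using mi by (simp add: dvd_eq_mod_eq_0)
      moreover have "int p ^ N = int p ^ (d * n) * int p ^ n" by (simp add: N_def power_add)
      moreover have "p > 0" using p prime_gt_0_nat by blast
      ultimately have "int p ^ n dvd (\<Sum>b\<in>fib p d N n c. \<mu> N b)" by simp
      then have "\<mu> n c mod int p ^ n = 0" using comp by (simp add: dvd_eq_mod_eq_0)
      moreover have "\<mu> n c mod int p ^ n = \<mu> n c" using mur[OF c] by simp
      ultimately show ?thesis by simp
    qed
    have "\<mu> = Iw_zero" unfolding Iw_zero_def fun_eq_iff using out inb by blast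
    then show "\<mu> \<in> {Iw_zero}" by simp
  qed
qed


end
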